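(* Let $M$ and $N$ be MV-algebras and let $p\colon M\to N$ be a function with $p(0)=0$ and $p(1)=1$. The following are equivalent: (1) $p$ is a probability map; (2) $p(a\oplus b)=p(a)+p(b)-p(a\odot b)$ for all $a,b\in M$, where $+$ and $-$ are the operations of the enveloping unital $\ell$-group $\Xi(N)$ of $N$; (3) for all $a,b\in M$, if $a\odot b=0$, then $p(a\oplus b)=p(a)\oplus p(b)$ and $p(a)\odot p(b)=0$; (4) for all $a,b\in M$, if $a\odot b=0$, then $p(a\oplus b)=p(a)+p(b)$ (sum computed in $\Xi(N)$).
   Context: For an MV-algebra $(M,\oplus,\neg,0)$: $1\coloneqq\neg 0$, $a\odot b\coloneqq\neg(\neg a\oplus\neg b)$, $a\vee b\coloneqq\neg(\neg a\oplus b)\oplus b$, $a\wedge b\coloneqq\neg(\neg a\vee\neg b)$. A probability map is a function $p\colon M\to N$ between MV-algebras such that for all $a,b\in M$: (P1) $p(a\oplus b)=p(a)\oplus p(b\wedge\neg a)$; (P2) $p(\neg a)=\neg p(a)$; (P3) $p(1)=1$. By Mundici's $\Gamma$-functor theory every MV-algebra $N$ is isomorphic to the unit interval $\Gamma(G,u)=[0,u]$ of a unique unital lattice-ordered Abelian group $(G,u)$ with $a\oplus b=(a+b)\wedge u$, $\neg a=u-a$; this $G$ is denoted $\Xi(N)$ (the enveloping unital $\ell$-group), and $N$ is identified with $[0,u]\subseteq\Xi(N)$. *)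

theory Defs
  imports Main "HOL-Library.Lattice_Algebras"
begin

definition mv_algebra :: "'a set \<Rightarrow> ('a \<Rightarrow> 'a \<Rightarrow> 'a) \<Rightarrow> ('a \<Rightarrow> 'a) \<Rightarrow> 'a \<Rightarrow> bool" where
  "mv_algebra A pl ng z \<longleftrightarrow>
     z \<in> A \<and>
     (\<forall>x\<in>A. \<forall>y\<in>A. pl x y \<in> A) \<and>
     (\<forall>x\<in>A. ng x \<in> A) \<and>
     (\<forall>x\<in>A. \<forall>y\<in>A. \<forall>w\<in>A. pl x (pl y w) = pl (pl x y) w) \<and>
     (\<forall>x\<in>A. \<forall>y\<in>A. pl x y = pl y x) \<and>
     (\<forall>x\<in>A. pl x z = x) \<and>
     (\<forall>x\<in>A. ng (ng x) = x) \<and>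
     (\<forall>x\<in>A. pl x (ng z) = ng z) \<and>
     (\<forall>x\<in>A. \<forall>y\<in>A. pl (ng (pl (ng x) y)) y = pl (ng (pl (ng y) x)) x)"

definition mv_one :: "('a \<Rightarrow> 'a) \<Rightarrow> 'a \<Rightarrow> 'a" where
  "mv_one ng z = ng z"

definition mv_odot :: "('a \<Rightarrow> 'a \<Rightarrow> 'a) \<Rightarrow> ('a \<Rightarrow> 'a) \<Rightarrow> 'a \<Rightarrow> 'a \<Rightarrow> 'a" where
  "mv_odot pl ng a b = ng (pl (ng a) (ng b))"

definition mv_sup :: "('a \<Rightarrow> 'a \<Rightarrow> 'a) \<Rightarrow> ('a \<Rightarrow> 'a) \<Rightarrow> 'a \<Rightarrow> 'a \<Rightarrow> 'a" where
  "mv_sup pl ng a b = pl (ng (pl (ng a) b)) b"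

definition mv_inf :: "('a \<Rightarrow> 'a \<Rightarrow> 'a) \<Rightarrow> ('a \<Rightarrow> 'a) \<Rightarrow> 'a \<Rightarrow> 'a \<Rightarrow> 'a" where
  "mv_inf pl ng a b = ng (mv_sup pl ng (ng a) (ng b))"

text \<open>Probability map p : M \<rightarrow> N (axioms P1--P3), M = (A,plA,ngA,zA), N = (B,plB,ngB,zB).\<close>
definition probability_map ::
  "'a set \<Rightarrow> ('a \<Rightarrow> 'a \<Rightarrow> 'a) \<Rightarrow> ('a \<Rightarrow> 'a) \<Rightarrow> 'a \<Rightarrow>
   'b set \<Rightarrow> ('b \<Rightarrow> 'b \<Rightarrow> 'b) \<Rightarrow> ('b \<Rightarrow> 'b) \<Rightarrow> 'b \<Rightarrow> ('a \<Rightarrow> 'b) \<Rightarrow> bool" where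
  "probability_map A plA ngA zA B plB ngB zB p \<longleftrightarrow>
     (\<forall>a\<in>A. p a \<in> B) \<and>
     (\<forall>a\<in>A. \<forall>b\<in>A. p (plA a b) = plB (p a) (p (mv_inf plA ngA b (ngA a)))) \<and>
     (\<forall>a\<in>A. p (ngA a) = ngB (p a)) \<and>
     p (mv_one ngA zA) = mv_one ngB zB"

definition strong_unit :: "'g::lattice_ab_group_add \<Rightarrow> bool" where
  "strong_unit u \<longleftrightarrow> 0 \<le> u \<and> (\<forall>x::'g. \<exists>n::nat. x \<le> (\<Sum>i<n. u))"

text \<open>\<iota> is an isomorphism of the MV-algebra (B,pl,ng,z) onto \<Gamma>(G,u) = [0,u] with
  a \<oplus> b = (a+b) \<sqinter> u and \<not>a = u - a.\<close>
definition gamma_iso ::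
  "'b set \<Rightarrow> ('b \<Rightarrow> 'b \<Rightarrow> 'b) \<Rightarrow> ('b \<Rightarrow> 'b) \<Rightarrow> 'b \<Rightarrow> 'g::lattice_ab_group_add \<Rightarrow> ('b \<Rightarrow> 'g) \<Rightarrow> bool" where
  "gamma_iso B pl ng z u \<iota> \<longleftrightarrow>
     bij_betw \<iota> B {0..u} \<and>
     \<iota> z = 0 \<and>
     (\<forall>x\<in>B. \<forall>y\<in>B. \<iota> (pl x y) = inf (\<iota> x + \<iota> y) u) \<and>
     (\<forall>x\<in>B. \<iota> (ng x) = u - \<iota> x)"

end

theory Submission imports Defs begin
locale mvA =
  fixes A :: "'a set" and pl :: "'a \<Rightarrow> 'a \<Rightarrow> 'a" and ng :: "'a \<Rightarrow> 'a" and z :: 'a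
  assumes mv: "mv_algebra A pl ng z"
begin

lemma z_cl: "z \<in> A" and pl_cl: "x \<in> A \<Longrightarrow> y \<in> A \<Longrightarrow> pl x y \<in> A"
  and ng_cl: "x \<in> A \<Longrightarrow> ng x \<in> A"
  and assoc: "x \<in> A \<Longrightarrow> y \<in> A \<Longrightarrow> w \<in> A \<Longrightarrow> pl x (pl y w) = pl (pl x y) w"
  and comm: "x \<in> A \<Longrightarrow> y \<in> A \<Longrightarrow> pl x y = pl y x"
  and zr: "x \<in> A \<Longrightarrow> pl x z = x"
  and nn: "x \<in> A \<Longrightarrow> ng (ng x) = x"
  and oner: "x \<in> A \<Longrightarrow> pl x (ng z) = ng z"
  and ax: "x \<in> A \<Longrightarrow> y \<in> A \<Longrightarrow> pl (ng (pl (ng x) y)) y = pl (ng (pl (ng y) x)) x"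
  using mv unfolding mv_algebra_def by blast+

lemma zl: "x \<in> A \<Longrightarrow> pl z x = x" using comm zr z_cl by metis
lemma onel: "x \<in> A \<Longrightarrow> pl (ng z) x = ng z" using comm oner z_cl ng_cl by metis

lemma compl: "x \<in> A \<Longrightarrow> pl (ng x) x = ng z"
proof -
  assume x: "x \<in> A"
  have "pl (ng (pl (ng x) (ng z))) (ng z) = pl (ng (pl (ng (ng z)) x)) x"
    using ax[OF x ng_cl[OF z_cl]] .
  thus ?thesis using x z_cl ng_cl oner nn zl by metis
qed

lemma compl2: "x \<in> A \<Longrightarrow> pl x (ng x) = ng z" using compl comm ng_cl by metis

lemma orth_le: "x \<in> A \<Longrightarrow> y \<in> A \<Longrightarrow> mv_odot pl ng x y = z \<Longrightarrow> pl (ng x) (ng y) = ng z"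
  unfolding mv_odot_def by (metis nn pl_cl ng_cl)

lemma odot_pl: "x \<in> A \<Longrightarrow> y \<in> A \<Longrightarrow> mv_odot pl ng x (ng (pl x y)) = z"
proof -
  assume x: "x \<in> A" and y: "y \<in> A"
  have "pl (ng x) (pl x y) = ng z" using assoc[OF ng_cl[OF x] x y] compl[OF x] onel[OF y] by simp
  thus ?thesis unfolding mv_odot_def using nn x y pl_cl z_cl by metis
qed

lemma inf_eq: "a \<in> A \<Longrightarrow> b \<in> A \<Longrightarrow> mv_inf pl ng b (ng a) = ng (pl (ng (pl b a)) a)"
  unfolding mv_inf_def mv_sup_def by (simp add: nn)

lemma c_cl: "a \<in> A \<Longrightarrow> b \<in> A \<Longrightarrow> mv_inf pl ng b (ng a) \<in> A"
  using inf_eq pl_cl ng_cl by simp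

lemma key_ii: "a \<in> A \<Longrightarrow> b \<in> A \<Longrightarrow> pl a (mv_inf pl ng b (ng a)) = pl a b"
proof -
  assume a: "a \<in> A" and b: "b \<in> A"
  have X: "pl b a \<in> A" using a b pl_cl by simp
  have "pl (ng (pl (ng (pl b a)) a)) a = pl (ng (pl (ng a) (pl b a))) (pl b a)"
    using ax[OF X a] .
  also have "pl (ng a) (pl b a) = ng z" using a b assoc comm compl onel ng_cl
    by (metis)
  finally have "pl (ng (pl (ng (pl b a)) a)) a = pl b a" using nn z_cl zl X by simp
  thus ?thesis using inf_eq[OF a b] comm a b ng_cl pl_cl by metis
qed

lemma key_i: "a \<in> A \<Longrightarrow> b \<in> A \<Longrightarrow> mv_odot pl ng a (mv_inf pl ng b (ng a)) = z"
  using inf_eq odot_pl comm ng_cl pl_cl by metis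

lemma orth_c: "a \<in> A \<Longrightarrow> b \<in> A \<Longrightarrow> mv_odot pl ng a b = z \<Longrightarrow> mv_inf pl ng b (ng a) = b"
proof -
  assume a: "a \<in> A" and b: "b \<in> A" and o: "mv_odot pl ng a b = z"
  have "pl (ng (pl (ng (ng b)) a)) a = pl (ng (pl (ng a) (ng b))) (ng b)"
    using ax[OF ng_cl[OF b] a] .
  also have "\<dots> = ng b" using orth_le[OF a b o] nn z_cl zl ng_cl b by simp
  finally have "pl (ng (pl b a)) a = ng b" using nn b by simp
  thus ?thesis using inf_eq[OF a b] nn b by simp
qed

lemma decomp: "b \<in> A \<Longrightarrow> x \<in> A \<Longrightarrow> pl (ng b) x = ng z \<Longrightarrow> x = pl b (ng (pl b (ng x)))"
proof -
  assume b: "b \<in> A" and x: "x \<in> A" and h: "pl (ng b) x = ng z"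
  have "pl (ng (pl (ng x) b)) b = pl (ng (pl (ng b) x)) x" using ax[OF x b] .
  also have "\<dots> = x" using h nn z_cl zl x by simp
  finally show ?thesis using comm b x ng_cl pl_cl by metis
qed

lemma d_le: "a \<in> A \<Longrightarrow> b \<in> A \<Longrightarrow> pl (ng (mv_odot pl ng a b)) b = ng z"
  unfolding mv_odot_def using nn assoc compl onel ng_cl pl_cl by metis

lemma e_eq: "a \<in> A \<Longrightarrow> b \<in> A \<Longrightarrow> ng (pl (mv_odot pl ng a b) (ng b)) = mv_inf pl ng b (ng a)"
proof -
  assume a: "a \<in> A" and b: "b \<in> A"
  have "pl (ng (pl (ng a) (ng b))) (ng b) = pl (ng (pl (ng (ng b)) a)) a" using ax[OF a ng_cl[OF b]] .
  thus ?thesis unfolding mv_odot_def using inf_eq[OF a b] nn b by simp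
qed

end
lemma G1: "(x::'g::lattice_ab_group_add) + y \<le> u \<Longrightarrow> inf (x+y) u = x+y"
  by (simp add: inf_absorb1)
lemma G2: "(u::'g::lattice_ab_group_add) - inf ((u-x) + (u-y)) u = 0 \<longleftrightarrow> x + y \<le> u"
proof -
  have "u - inf ((u-x) + (u-y)) u = 0 \<longleftrightarrow> inf ((u-x) + (u-y)) u = u" by (metis diff_eq_diff_eq diff_self)
  also have "\<dots> \<longleftrightarrow> u \<le> (u-x) + (u-y)" by (simp add: inf_absorb2 le_iff_inf inf_commute)
  also have "\<dots> \<longleftrightarrow> x + y \<le> u" by (simp add: algebra_simps)
  finally show ?thesis .
qed
lemma G3: "0 \<le> (w::'g::lattice_ab_group_add) \<Longrightarrow> y \<le> u \<Longrightarrow> y \<le> inf (y + w) u"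
  by (simp add: add_increasing2)
lemma G4: "(y::'g::lattice_ab_group_add) \<le> u - x \<Longrightarrow> x + y \<le> u"
  by (simp add: le_diff_eq add.commute)

theorem proposition3p3:
  fixes A :: "'a set" and plA :: "'a \<Rightarrow> 'a \<Rightarrow> 'a" and ngA :: "'a \<Rightarrow> 'a" and zA :: 'a
    and B :: "'b set" and plB :: "'b \<Rightarrow> 'b \<Rightarrow> 'b" and ngB :: "'b \<Rightarrow> 'b" and zB :: 'b
    and u :: "'g::lattice_ab_group_add" and \<iota> :: "'b \<Rightarrow> 'g"
    and p :: "'a \<Rightarrow> 'b"
  assumes M: "mv_algebra A plA ngA zA"
    and N: "mv_algebra B plB ngB zB"
    and unit: "strong_unit u"
    and iso: "gamma_iso B plB ngB zB u \<iota>"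
    and p_maps: "\<forall>a\<in>A. p a \<in> B"
    and p0: "p zA = zB"
    and p1: "p (mv_one ngA zA) = mv_one ngB zB"
  shows
    "(probability_map A plA ngA zA B plB ngB zB p
        \<longleftrightarrow> (\<forall>a\<in>A. \<forall>b\<in>A. \<iota> (p (plA a b)) = \<iota> (p a) + \<iota> (p b) - \<iota> (p (mv_odot plA ngA a b))))
   \<and> (probability_map A plA ngA zA B plB ngB zB p
        \<longleftrightarrow> (\<forall>a\<in>A. \<forall>b\<in>A. mv_odot plA ngA a b = zA \<longrightarrow>
               p (plA a b) = plB (p a) (p b) \<and> mv_odot plB ngB (p a) (p b) = zB))
   \<and> (probability_map A plA ngA zA B plB ngB zB p
        \<longleftrightarrow> (\<forall>a\<in>A. \<forall>b\<in>A. mv_odot plA ngA a b = zA \<longrightarrow>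
               \<iota> (p (plA a b)) = \<iota> (p a) + \<iota> (p b)))"
proof -
  interpret mA: mvA A plA ngA zA using M by (unfold_locales)
  interpret mB: mvA B plB ngB zB using N by (unfold_locales)
  have pB: "\<And>a. a \<in> A \<Longrightarrow> p a \<in> B" using p_maps by blast
  have rng: "\<And>x. x \<in> B \<Longrightarrow> 0 \<le> \<iota> x \<and> \<iota> x \<le> u"
    using iso unfolding gamma_iso_def bij_betw_def by auto
  have inj: "\<And>x y. x \<in> B \<Longrightarrow> y \<in> B \<Longrightarrow> \<iota> x = \<iota> y \<Longrightarrow> x = y"
    using iso unfolding gamma_iso_def bij_betw_def inj_on_def by blast
  have ipl: "\<And>x y. x \<in> B \<Longrightarrow> y \<in> B \<Longrightarrow> \<iota> (plB x y) = inf (\<iota> x + \<iota> y) u"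
    using iso unfolding gamma_iso_def by blast
  have ing: "\<And>x. x \<in> B \<Longrightarrow> \<iota> (ngB x) = u - \<iota> x"
    using iso unfolding gamma_iso_def by blast
  have iz: "\<iota> zB = 0" using iso unfolding gamma_iso_def by blast
  have ione: "\<iota> (mv_one ngB zB) = u" using ing[OF mB.z_cl] iz unfolding mv_one_def by simp
  have iodot: "\<And>x y. x \<in> B \<Longrightarrow> y \<in> B \<Longrightarrow>
      \<iota> (mv_odot plB ngB x y) = u - inf ((u - \<iota> x) + (u - \<iota> y)) u"
    unfolding mv_odot_def using ing ipl mB.ng_cl mB.pl_cl by simp
  have odotB: "\<And>x y. x \<in> B \<Longrightarrow> y \<in> B \<Longrightarrow> mv_odot plB ngB x y \<in> B"
    unfolding mv_odot_def using mB.ng_cl mB.pl_cl by simp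
  define S4 where "S4 \<longleftrightarrow> (\<forall>a\<in>A. \<forall>b\<in>A. mv_odot plA ngA a b = zA \<longrightarrow>
               \<iota> (p (plA a b)) = \<iota> (p a) + \<iota> (p b))"
  have B1: "S4" if Pm: "probability_map A plA ngA zA B plB ngB zB p"
  proof -
    have P1: "\<And>a b. a \<in> A \<Longrightarrow> b \<in> A \<Longrightarrow> p (plA a b) = plB (p a) (p (mv_inf plA ngA b (ngA a)))"
      and P2: "\<And>a. a \<in> A \<Longrightarrow> p (ngA a) = ngB (p a)"
      using Pm unfolding probability_map_def by blast+
    have mono: "\<iota> (p b) \<le> \<iota> (p x)" if b: "b \<in> A" and x: "x \<in> A"
      and h: "plA (ngA b) x = ngA zA" for b x
    proof -
      define w where "w = ngA (plA b (ngA x))"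
      have w: "w \<in> A" unfolding w_def using b x mA.ng_cl mA.pl_cl by simp
      have "x = plA b w" unfolding w_def using mA.decomp[OF b x h] .
      hence "\<iota> (p x) = inf (\<iota> (p b) + \<iota> (p (mv_inf plA ngA w (ngA b)))) u"
        using P1[OF b w] ipl pB b mA.c_cl[OF b w] by simp
      thus ?thesis using G3 rng pB b mA.c_cl[OF b w] by metis
    qed
    show ?thesis unfolding S4_def
    proof (intro ballI impI)
      fix a b assume a: "a \<in> A" and b: "b \<in> A" and o: "mv_odot plA ngA a b = zA"
      have "p (plA a b) = plB (p a) (p b)" using P1[OF a b] mA.orth_c[OF a b o] by simp
      hence e1: "\<iota> (p (plA a b)) = inf (\<iota> (p a) + \<iota> (p b)) u" using ipl pB a b by simp
      have "plA (ngA b) (ngA a) = ngA zA" using mA.orth_le[OF a b o] mA.comm mA.ng_cl a b by metis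
      hence "\<iota> (p b) \<le> \<iota> (p (ngA a))" using mono b mA.ng_cl a by blast
      also have "\<dots> = u - \<iota> (p a)" using P2 a ing pB by simp
      finally have "\<iota> (p a) + \<iota> (p b) \<le> u" by (rule G4)
      thus "\<iota> (p (plA a b)) = \<iota> (p a) + \<iota> (p b)" using e1 G1 by metis
    qed
  qed
  have le_u: "\<And>a b. a \<in> A \<Longrightarrow> b \<in> A \<Longrightarrow> \<iota> (p (plA a b)) \<le> u"
    using rng pB mA.pl_cl by blast
  have B2: "probability_map A plA ngA zA B plB ngB zB p" if s4: S4
  proof -
    have S: "\<And>a b. a \<in> A \<Longrightarrow> b \<in> A \<Longrightarrow> mv_odot plA ngA a b = zA \<Longrightarrow>
               \<iota> (p (plA a b)) = \<iota> (p a) + \<iota> (p b)" using s4 unfolding S4_def by blast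
    have P2: "p (ngA a) = ngB (p a)" if a: "a \<in> A" for a
    proof -
      have "mv_odot plA ngA a (ngA a) = zA"
        using mA.odot_pl[OF a mA.z_cl] mA.zr a by simp
      hence "\<iota> (p (plA a (ngA a))) = \<iota> (p a) + \<iota> (p (ngA a))" using S a mA.ng_cl by blast
      moreover have "\<iota> (p (plA a (ngA a))) = u" using mA.compl2[OF a] p1 ione unfolding mv_one_def by simp
      ultimately have "\<iota> (p (ngA a)) = u - \<iota> (p a)" by (simp add: algebra_simps)
      hence "\<iota> (p (ngA a)) = \<iota> (ngB (p a))" using ing pB a by simp
      thus ?thesis using inj pB a mA.ng_cl mB.ng_cl by blast
    qed
    have P1: "p (plA a b) = plB (p a) (p (mv_inf plA ngA b (ngA a)))" if a: "a \<in> A" and b: "b \<in> A" for a b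
    proof -
      define c where "c = mv_inf plA ngA b (ngA a)"
      have c: "c \<in> A" unfolding c_def using mA.c_cl a b by simp
      have "\<iota> (p (plA a b)) = \<iota> (p (plA a c))" unfolding c_def using mA.key_ii a b by simp
      also have "\<dots> = \<iota> (p a) + \<iota> (p c)" using S a c mA.key_i a b unfolding c_def by blast
      finally have e: "\<iota> (p (plA a b)) = \<iota> (p a) + \<iota> (p c)" .
      hence "\<iota> (p a) + \<iota> (p c) \<le> u" using le_u a b by metis
      hence "\<iota> (plB (p a) (p c)) = \<iota> (p (plA a b))" using e ipl pB a c G1 by metis
      thus ?thesis using inj pB a b c mA.pl_cl mB.pl_cl unfolding c_def by metis
    qed
    show ?thesis unfolding probability_map_def using P1 P2 p1 pB by blast
  qed
  have C: "\<iota> (p (plA a b)) = \<iota> (p a) + \<iota> (p b) - \<iota> (p (mv_odot plA ngA a b))"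
    if s4: S4 and a: "a \<in> A" and b: "b \<in> A" for a b
  proof -
    have S: "\<And>a b. a \<in> A \<Longrightarrow> b \<in> A \<Longrightarrow> mv_odot plA ngA a b = zA \<Longrightarrow>
               \<iota> (p (plA a b)) = \<iota> (p a) + \<iota> (p b)" using s4 unfolding S4_def by blast
    define c where "c = mv_inf plA ngA b (ngA a)"
    have c: "c \<in> A" unfolding c_def using mA.c_cl a b by simp
    have "\<iota> (p (plA a b)) = \<iota> (p (plA a c))" unfolding c_def using mA.key_ii a b by simp
    also have "\<dots> = \<iota> (p a) + \<iota> (p c)" using S a c mA.key_i a b unfolding c_def by blast
    finally have e1: "\<iota> (p (plA a b)) = \<iota> (p a) + \<iota> (p c)" .
    define d where "d = mv_odot plA ngA a b"
    have d: "d \<in> A" unfolding d_def mv_odot_def using a b mA.ng_cl mA.pl_cl by simp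
    have ce: "c = ngA (plA d (ngA b))" unfolding c_def d_def using mA.e_eq a b by simp
    have "b = plA d c" unfolding ce using mA.decomp[OF d b] mA.d_le a b unfolding d_def by simp
    hence "\<iota> (p b) = \<iota> (p d) + \<iota> (p c)"
      using S d c unfolding ce using mA.odot_pl d b mA.ng_cl by metis
    thus ?thesis using e1 unfolding d_def by (simp add: algebra_simps)
  qed
  have D: "S4" if s2: "\<forall>a\<in>A. \<forall>b\<in>A. \<iota> (p (plA a b)) = \<iota> (p a) + \<iota> (p b) - \<iota> (p (mv_odot plA ngA a b))"
    unfolding S4_def using s2 p0 iz by simp
  have E1: "S4" if s3: "\<forall>a\<in>A. \<forall>b\<in>A. mv_odot plA ngA a b = zA \<longrightarrow>
               p (plA a b) = plB (p a) (p b) \<and> mv_odot plB ngB (p a) (p b) = zB"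
    unfolding S4_def
  proof (intro ballI impI)
    fix a b assume a: "a \<in> A" and b: "b \<in> A" and o: "mv_odot plA ngA a b = zA"
    have h1: "p (plA a b) = plB (p a) (p b)" and h2: "mv_odot plB ngB (p a) (p b) = zB"
      using s3 a b o by blast+
    have "u - inf ((u - \<iota> (p a)) + (u - \<iota> (p b))) u = 0"
      using h2 iodot pB a b iz by metis
    hence "\<iota> (p a) + \<iota> (p b) \<le> u" using G2 by blast
    thus "\<iota> (p (plA a b)) = \<iota> (p a) + \<iota> (p b)" using h1 ipl pB a b G1 by metis
  qed
  have E2: "p (plA a b) = plB (p a) (p b) \<and> mv_odot plB ngB (p a) (p b) = zB"
    if s4: S4 and a: "a \<in> A" and b: "b \<in> A" and o: "mv_odot plA ngA a b = zA" for a b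
  proof -
    have e: "\<iota> (p (plA a b)) = \<iota> (p a) + \<iota> (p b)" using s4 a b o unfolding S4_def by blast
    hence le: "\<iota> (p a) + \<iota> (p b) \<le> u" using le_u a b by metis
    hence "\<iota> (plB (p a) (p b)) = \<iota> (p (plA a b))" using e ipl pB a b G1 by metis
    hence 1: "p (plA a b) = plB (p a) (p b)" using inj pB a b mA.pl_cl mB.pl_cl by metis
    have "\<iota> (mv_odot plB ngB (p a) (p b)) = 0" using iodot pB a b G2 le by metis
    hence "mv_odot plB ngB (p a) (p b) = zB" using inj iz odotB pB a b mB.z_cl by metis
    with 1 show ?thesis by blast
  qed
  have I4: "probability_map A plA ngA zA B plB ngB zB p \<longleftrightarrow> S4" using B1 B2 by blast
  show ?thesis unfolding I4
  proof (intro conjI)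
    show "S4 = (\<forall>a\<in>A. \<forall>b\<in>A. \<iota> (p (plA a b)) = \<iota> (p a) + \<iota> (p b) - \<iota> (p (mv_odot plA ngA a b)))"
      using C D by blast
    show "S4 = (\<forall>a\<in>A. \<forall>b\<in>A. mv_odot plA ngA a b = zA \<longrightarrow>
               p (plA a b) = plB (p a) (p b) \<and> mv_odot plB ngB (p a) (p b) = zB)"
      using E1 E2 by blast
    show "S4 = (\<forall>a\<in>A. \<forall>b\<in>A. mv_odot plA ngA a b = zA \<longrightarrow> \<iota> (p (plA a b)) = \<iota> (p a) + \<iota> (p b))"
      unfolding S4_def ..
  qed
qed

end
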